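(* A function $r:(0,\infty)\to(0,\infty)$ is of the form $r=r[g]$ for some complete Bernstein function $g$ if and only if $t\mapsto t\,r(t)$ is a Bernstein function.
   Context: A Bernstein function is $h\in C^\infty(0,\infty)$ with $h\ge0$ and $(-1)^nh^{(n)}\le0$ for $n\ge1$; equivalently $h(z)=a+bz+\int_{(0,\infty)}(1-e^{-sz})\mu(\mathrm ds)$ with $a,b\ge0$, $\mu$ positive Radon on $(0,\infty)$, $\int\frac{s}{1+s}\mu(\mathrm ds)<\infty$ (written $h\sim(a,b,\mu)$). It is a complete Bernstein function if $\mu$ has a completely monotone density with respect to Lebesgue measure (completely monotone: $C^\infty$ with $(-1)^nm^{(n)}\ge0$ for all $n\ge0$). For $g\sim(a,b,\mu)$, the rate function is $r[g](t):=\frac a2+\frac bt+\int_{(0,\infty)}\min(s/t,1)\mu(\mathrm ds)$, $t>0$. *)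

theory Defs
  imports "HOL-Analysis.Analysis"
begin

definition bernstein :: "(real \<Rightarrow> real) \<Rightarrow> bool" where
  "bernstein h \<longleftrightarrow>
     (\<forall>n x. x > 0 \<longrightarrow> ((deriv ^^ n) h) differentiable (at x)) \<and>
     (\<forall>x>0. h x \<ge> 0) \<and>
     (\<forall>n\<ge>1. \<forall>x>0. (-1) ^ n * (deriv ^^ n) h x \<le> 0)"

definition completely_monotone :: "(real \<Rightarrow> real) \<Rightarrow> bool" where
  "completely_monotone m \<longleftrightarrow>
     (\<forall>n x. x > 0 \<longrightarrow> ((deriv ^^ n) m) differentiable (at x)) \<and>
     (\<forall>n. \<forall>x>0. (-1) ^ n * (deriv ^^ n) m x \<ge> 0)"

text \<open>g is a complete Bernstein function with Levy triple (a, b, mu), where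
  mu(ds) = m(s) ds on (0,infinity) with m completely monotone.\<close>
definition cbf_triple :: "(real \<Rightarrow> real) \<Rightarrow> real \<Rightarrow> real \<Rightarrow> (real \<Rightarrow> real) \<Rightarrow> bool" where
  "cbf_triple g a b m \<longleftrightarrow>
     a \<ge> 0 \<and> b \<ge> 0 \<and> completely_monotone m \<and>
     set_integrable lborel {0<..} (\<lambda>s. s / (1 + s) * m s) \<and>
     (\<forall>z>0. g z = a + b * z + (LINT s:{0<..}|lborel. (1 - exp (- s * z)) * m s))"

definition rate_fn :: "real \<Rightarrow> real \<Rightarrow> (real \<Rightarrow> real) \<Rightarrow> real \<Rightarrow> real" where
  "rate_fn a b m t = a / 2 + b / t + (LINT s:{0<..}|lborel. min (s / t) 1 * m s)"

end

theory Submission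
  imports Defs
begin


lemma diff_transfer:
  fixes f g :: "real \<Rightarrow> real"
  assumes "f differentiable at x" "x > 0" "\<forall>y>0. f y = g y"
  shows "g differentiable at x"
proof -
  have "DERIV f x :> deriv f x" using assms(1) DERIV_deriv_iff_real_differentiable by blast
  then have "DERIV g x :> deriv f x"
    by (rule has_field_derivative_transform_within_open[where S="{0<..}"]) (use assms in auto)
  then show ?thesis using real_differentiable_def by blast
qed

lemma eventually_pos_nhds: "(x::real) > 0 \<Longrightarrow> eventually (\<lambda>y. y > 0) (nhds x)"
  by (rule eventually_nhds_in_open[of "{0<..}", simplified]) auto

lemma deriv_iter_cong:
  fixes f g :: "real \<Rightarrow> real"
  assumes "\<forall>x>0. f x = g x"
  shows "\<forall>x>0. (deriv ^^ n) f x = (deriv ^^ n) g x"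
proof (induction n)
  case 0 then show ?case using assms by simp
next
  case (Suc n)
  show ?case
  proof (intro allI impI)
    fix x :: real assume x: "x > 0"
    have "eventually (\<lambda>y. (deriv ^^ n) f y = (deriv ^^ n) g y) (nhds x)"
      using eventually_pos_nhds[OF x] Suc by (auto elim: eventually_mono)
    then show "(deriv ^^ Suc n) f x = (deriv ^^ Suc n) g x"
      by (simp add: deriv_cong_ev)
  qed
qed

lemma deriv_iter_minus:
  fixes f :: "real \<Rightarrow> real"
  assumes "\<forall>n x. x > 0 \<longrightarrow> ((deriv ^^ n) f) differentiable (at x)"
  shows "\<forall>x>0. (deriv ^^ n) (\<lambda>x. - f x) x = - (deriv ^^ n) f x"
proof (induction n)
  case 0 then show ?case by simp
next
  case (Suc n)
  show ?case
  proof (intro allI impI)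
    fix x :: real assume x: "x > 0"
    have "eventually (\<lambda>y. (deriv ^^ n) (\<lambda>x. - f x) y = - (deriv ^^ n) f y) (nhds x)"
      using eventually_pos_nhds[OF x] Suc by (auto elim: eventually_mono)
    then have "deriv ((deriv ^^ n) (\<lambda>x. - f x)) x = deriv (\<lambda>y. - (deriv ^^ n) f y) x"
      by (rule deriv_cong_ev) simp
    also have "\<dots> = - deriv ((deriv ^^ n) f) x"
    proof (rule deriv_minus)
      have "DERIV ((deriv ^^ n) f) x :> deriv ((deriv ^^ n) f) x"
        using assms x DERIV_deriv_iff_real_differentiable by blast
      then show "(deriv ^^ n) f field_differentiable at x"
        unfolding field_differentiable_def by blast
    qed
    finally show "(deriv ^^ Suc n) (\<lambda>x. - f x) x = - (deriv ^^ Suc n) f x" by simp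
  qed
qed

lemma deriv_iter_add2: "(deriv ^^ (n + 2)) h = (deriv ^^ n) (deriv (deriv h))"
  unfolding funpow_add by (simp add: numeral_2_eq_2)

lemma bernstein_from:
  fixes h hd m :: "real \<Rightarrow> real"
  assumes dh: "\<And>x. x > 0 \<Longrightarrow> (h has_real_derivative hd x) (at x)"
    and dh1: "\<And>x. x > 0 \<Longrightarrow> (hd has_real_derivative - m x) (at x)"
    and cm: "completely_monotone m"
    and hpos: "\<forall>x>0. h x \<ge> 0" and h1pos: "\<forall>x>0. hd x \<ge> 0"
  shows "bernstein h"
proof -
  have sm: "\<forall>n x. x > 0 \<longrightarrow> ((deriv ^^ n) m) differentiable (at x)"
   and sg: "\<forall>n. \<forall>x>0. (-1) ^ n * (deriv ^^ n) m x \<ge> 0"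
    using cm unfolding completely_monotone_def by auto
  have d1: "\<forall>x>0. deriv h x = hd x" using dh DERIV_imp_deriv by blast
  have d2: "\<forall>x>0. deriv (deriv h) x = - m x"
  proof (intro allI impI)
    fix x :: real assume x: "x > 0"
    have "deriv (deriv h) x = deriv hd x"
      by (rule deriv_cong_ev) (use eventually_pos_nhds[OF x] d1 in \<open>auto elim: eventually_mono\<close>)
    then show "deriv (deriv h) x = - m x" using dh1[OF x] DERIV_imp_deriv by simp
  qed
  have dn: "\<forall>x>0. (deriv ^^ (n + 2)) h x = - (deriv ^^ n) m x" for n
    unfolding deriv_iter_add2
    using deriv_iter_cong[OF d2, of n] deriv_iter_minus[OF sm, of n]
    by simp
  have diff: "((deriv ^^ n) h) differentiable (at x)" if x: "x > 0" for n x
  proof -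
    consider "n = 0" | "n = 1" | k where "n = k + 2"
      by (metis One_nat_def add_2_eq_Suc' not0_implies_Suc)
    then show ?thesis
    proof cases
      case 1 then show ?thesis using dh[OF x] real_differentiable_def by auto
    next
      case 2
      have "hd differentiable at x" using dh1[OF x] real_differentiable_def by blast
      then show ?thesis using 2 diff_transfer[of hd x "deriv h"] x d1 by auto
    next
      case 3
      have "(\<lambda>y. - (deriv ^^ k) m y) differentiable at x" using sm x by auto
      moreover have "\<forall>y>0. (\<lambda>y. - (deriv ^^ k) m y) y = (deriv ^^ n) h y"
        using dn[of k] 3 by (simp only:) simp
      ultimately show ?thesis by (rule diff_transfer[OF _ x])
    qed
  qed
  have sgn: "(-1) ^ n * (deriv ^^ n) h x \<le> 0" if "n \<ge> 1" "x > 0" for n x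
  proof -
    consider "n = 1" | k where "n = k + 2"
      using \<open>n \<ge> 1\<close> by (metis One_nat_def add_2_eq_Suc' le_Suc_eq le_zero_eq not0_implies_Suc)
    then show ?thesis
    proof cases
      case 1 then show ?thesis using d1 h1pos that by auto
    next
      case 2
      have e1: "(deriv ^^ n) h x = - (deriv ^^ k) m x" using dn[of k] that unfolding 2 by blast
      have e2: "(-1) ^ n = ((-1) ^ k :: real)" using 2 by simp
      have "0 \<le> (-1) ^ k * (deriv ^^ k) m x" using sg that by blast
      then show ?thesis unfolding e1 e2 by simp
    qed
  qed
  show ?thesis unfolding bernstein_def using diff sgn hpos by auto
qed

lemma cm_from_bernstein:
  fixes h :: "real \<Rightarrow> real"
  assumes "bernstein h"
  shows "completely_monotone (\<lambda>x. - deriv (deriv h) x)"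
proof -
  have sm: "\<forall>n x. x > 0 \<longrightarrow> ((deriv ^^ n) h) differentiable (at x)"
   and sg: "\<forall>n\<ge>1. \<forall>x>0. (-1) ^ n * (deriv ^^ n) h x \<le> 0"
    using assms unfolding bernstein_def by auto
  have sm2: "\<forall>n x. x > 0 \<longrightarrow> ((deriv ^^ n) (deriv (deriv h))) differentiable (at x)"
    using sm by (metis deriv_iter_add2)
  have eq: "\<forall>x>0. (deriv ^^ n) (\<lambda>x. - deriv (deriv h) x) x = - (deriv ^^ (n+2)) h x" for n
    unfolding deriv_iter_add2 using deriv_iter_minus[OF sm2, of n] by simp
  have "((deriv ^^ n) (\<lambda>x. - deriv (deriv h) x)) differentiable (at x)" if "x > 0" for n x
  proof -
    have "(\<lambda>y. - (deriv ^^ (n+2)) h y) differentiable at x"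
      by (rule differentiable_minus, rule sm[rule_format, OF that])
    moreover have "\<forall>y>0. (\<lambda>y. - (deriv ^^ (n+2)) h y) y = (deriv ^^ n) (\<lambda>x. - deriv (deriv h) x) y"
      using eq[of n] by metis
    ultimately show ?thesis by (rule diff_transfer[OF _ that])
  qed
  moreover have "(-1) ^ n * (deriv ^^ n) (\<lambda>x. - deriv (deriv h) x) x \<ge> 0" if "x > 0" for n x
  proof -
    have "n + 2 \<ge> 1" by simp
    then have le: "(-1) ^ (n+2) * (deriv ^^ (n+2)) h x \<le> 0" using sg that by blast
    have e2: "(-1) ^ (n+2) = ((-1) ^ n :: real)" by simp
    have e1: "(deriv ^^ n) (\<lambda>x. - deriv (deriv h) x) x = - (deriv ^^ (n+2)) h x" using eq[of n] that by blast
    show ?thesis using le unfolding e1 e2 by simp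
  qed
  ultimately show ?thesis unfolding completely_monotone_def by auto
qed



lemma meas_ind:
  fixes g :: "real \<Rightarrow> real"
  assumes "continuous_on A g" "open A"
  shows "set_borel_measurable lborel A g"
  unfolding set_borel_measurable_def
  using borel_measurable_continuous_on_indicator[OF _ assms(1)] assms(2) by simp

lemma int_bound:
  fixes m g :: "real \<Rightarrow> real"
  assumes base: "set_integrable lborel {0<..} (\<lambda>s. s / (1 + s) * m s)"
    and A: "A \<subseteq> {0<..}" "open A" and cg: "continuous_on A g"
    and bd: "\<And>s. s \<in> A \<Longrightarrow> \<bar>g s\<bar> \<le> C * (s / (1 + s) * m s)"
  shows "set_integrable lborel A g"
proof (rule set_integrable_bound[where f="\<lambda>s. C * (s / (1 + s) * m s)"])
  have "set_integrable lborel A (\<lambda>s. s / (1 + s) * m s)"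
    by (rule set_integrable_subset[OF base]) (use A in auto)
  then show "set_integrable lborel A (\<lambda>s. C * (s / (1 + s) * m s))"
    by (rule set_integrable_mult_right)
  show "set_borel_measurable lborel A g" by (rule meas_ind[OF cg A(2)])
  show "AE x in lborel. x \<in> A \<longrightarrow> norm (g x) \<le> norm (C * (x / (1 + x) * m x))"
  proof (intro AE_I2 impI)
    fix x assume "x \<in> A"
    then have "\<bar>g x\<bar> \<le> C * (x / (1 + x) * m x)" by (rule bd)
    also have "\<dots> \<le> \<bar>C * (x / (1 + x) * m x)\<bar>" by (rule abs_ge_self)
    finally show "norm (g x) \<le> norm (C * (x / (1 + x) * m x))" by simp
  qed
qed

lemma int_tail:
  fixes m :: "real \<Rightarrow> real"
  assumes base: "set_integrable lborel {0<..} (\<lambda>s. s / (1 + s) * m s)"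
    and cm: "continuous_on {0<..} m" and nn: "\<forall>s>0. m s \<ge> 0" and c: "c > 0"
  shows "set_integrable lborel {c<..} m"
proof (rule int_bound[OF base, where C="(1 + c) / c"])
  show "{c<..} \<subseteq> {0<..}" using c by auto
  show "continuous_on {c<..} m" by (rule continuous_on_subset[OF cm]) (use c in auto)
  fix s assume s: "s \<in> {c<..}"
  then have s0: "s > 0" "m s \<ge> 0" using c nn by auto
  have d: "0 < c * (1 + s)" using s c by simp
  have "(1 + c) / c * (s / (1 + s)) = ((1 + c) * s) / (c * (1 + s))" by simp
  also have "\<dots> \<ge> 1" using d s by (simp add: le_divide_eq_1_pos algebra_simps)
  finally have "1 \<le> (1 + c) / c * (s / (1 + s))" .
  then have "1 * m s \<le> ((1 + c) / c * (s / (1 + s))) * m s"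
    by (rule mult_right_mono) (use s0 in auto)
  then show "\<bar>m s\<bar> \<le> (1 + c) / c * (s / (1 + s) * m s)" using s0 by simp
qed auto

lemma int_head:
  fixes m :: "real \<Rightarrow> real"
  assumes base: "set_integrable lborel {0<..} (\<lambda>s. s / (1 + s) * m s)"
    and cm: "continuous_on {0<..} m" and nn: "\<forall>s>0. m s \<ge> 0"
  shows "set_integrable lborel {0<..<T} (\<lambda>s. s * m s)"
proof (rule int_bound[OF base, where C="1 + T"])
  show "{0<..<T} \<subseteq> {0<..}" by auto
  show "continuous_on {0<..<T} (\<lambda>s. s * m s)"
    by (intro continuous_intros continuous_on_subset[OF cm]) auto
  fix s assume s: "s \<in> {0<..<T}"
  then have s0: "s > 0" "m s \<ge> 0" "s < T" using nn by auto
  have "s \<le> (1 + T) * (s / (1 + s))"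
    using s0 by (simp add: field_simps)
  then have "s * m s \<le> ((1 + T) * (s / (1 + s))) * m s"
    by (rule mult_right_mono) (use s0 in auto)
  then show "\<bar>s * m s\<bar> \<le> (1 + T) * (s / (1 + s) * m s)" using s0 by simp
qed auto

lemma int_min:
  fixes m :: "real \<Rightarrow> real"
  assumes base: "set_integrable lborel {0<..} (\<lambda>s. s / (1 + s) * m s)"
    and cm: "continuous_on {0<..} m" and nn: "\<forall>s>0. m s \<ge> 0" and t: "t > 0"
  shows "set_integrable lborel {0<..} (\<lambda>s. min s t * m s)"
proof (rule int_bound[OF base, where C="1 + t"])
  show "continuous_on {0<..} (\<lambda>s. min s t * m s)"
    by (intro continuous_intros cm)
  fix s :: real assume s: "s \<in> {0<..}"
  then have s0: "s > 0" "m s \<ge> 0" using nn by auto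
  have k: "min s t * (1 + s) \<le> (1 + t) * s"
  proof (cases "s \<le> t")
    case True
    then have "s * s \<le> t * s" using s0 by (intro mult_right_mono) auto
    then show ?thesis using True by (simp add: min_def algebra_simps)
  next
    case False
    then show ?thesis by (simp add: min_def algebra_simps)
  qed
  have "min s t \<le> ((1 + t) * s) / (1 + s)" using k s0 by (simp add: pos_le_divide_eq)
  then have "min s t \<le> (1 + t) * (s / (1 + s))" by simp
  then have "min s t * m s \<le> ((1 + t) * (s / (1 + s))) * m s"
    by (rule mult_right_mono) (use s0 in auto)
  moreover have "0 \<le> min s t * m s" using s0 t by simp
  ultimately show "\<bar>min s t * m s\<bar> \<le> (1 + t) * (s / (1 + s) * m s)"
    by (metis abs_of_nonneg mult.assoc)
qed auto

lemma split_int: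
  fixes m :: "real \<Rightarrow> real"
  assumes base: "set_integrable lborel {0<..} (\<lambda>s. s / (1 + s) * m s)"
    and cm: "continuous_on {0<..} m" and nn: "\<forall>s>0. m s \<ge> 0" and t: "t > 0"
  shows "(LINT s:{0<..}|lborel. min s t * m s)
       = (LBINT s=ereal 0..ereal t. s * m s) + t * (LBINT s=ereal t..\<infinity>. m s)"
proof -
  have i: "set_integrable lborel {0<..} (\<lambda>s. min s t * m s)" by (rule int_min[OF assms])
  have "(LINT s:{0<..}|lborel. min s t * m s) = (LBINT s=ereal 0..\<infinity>. min s t * m s)"
    by (rule interval_integral_to_infinity_eq[symmetric])
  also have "\<dots> = (LBINT s=ereal 0..ereal t. min s t * m s) + (LBINT s=ereal t..\<infinity>. min s t * m s)"
  proof (rule interval_integral_sum[symmetric])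
    have "min (ereal 0) (min (ereal t) \<infinity>) = ereal 0" "max (ereal 0) (max (ereal t) \<infinity>) = \<infinity>"
      using t by (auto simp: min_def max_def)
    then show "interval_lebesgue_integrable lborel (min (ereal 0) (min (ereal t) \<infinity>))
      (max (ereal 0) (max (ereal t) \<infinity>)) (\<lambda>s. min s t * m s)"
      using i by (simp add: interval_lebesgue_integrable_def)
  qed
  also have "(LBINT s=ereal 0..ereal t. min s t * m s) = (LBINT s=ereal 0..ereal t. s * m s)"
    by (rule interval_integral_cong) (use t in \<open>auto simp: einterval_iff min_def max_def\<close>)
  also have "(LBINT s=ereal t..\<infinity>. min s t * m s) = (LBINT s=ereal t..\<infinity>. t * m s)"
    by (rule interval_integral_cong) (auto simp: einterval_iff min_def max_def)
  also have "\<dots> = t * (LBINT s=ereal t..\<infinity>. m s)" by simp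
  finally show ?thesis .
qed

lemma rate_mult:
  fixes m :: "real \<Rightarrow> real"
  assumes t: "t > 0"
  shows "t * rate_fn a b m t = a * t / 2 + b + (LINT s:{0<..}|lborel. min s t * m s)"
proof -
  have "t * (LINT s:{0<..}|lborel. min (s / t) 1 * m (s::real)) = (LINT s:{0<..}|lborel. t * (min (s / t) 1 * m s))"
    by (rule set_integral_mult_right[symmetric])
  also have "\<dots> = (LINT s:{0<..}|lborel. min s t * m s)"
  proof (rule set_lebesgue_integral_cong)
    show "\<forall>x. x \<in> {0<..} \<longrightarrow> t * (min (x / t) 1 * m x) = min x t * m x"
      using t by (auto simp: min_def field_simps)
  qed simp
  finally show ?thesis using t unfolding rate_fn_def by (simp add: field_simps)
qed

lemma prim_deriv:
  fixes f :: "real \<Rightarrow> real"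
  assumes cf: "continuous_on {0<..} f" and t: "t > 0"
  shows "((\<lambda>u. LBINT s=ereal 1..ereal u. f s) has_real_derivative f t) (at t)"
proof -
  define a where "a = min t 1 / 2"
  define b where "b = max t 1 + 1"
  have ab: "0 < a" "a < t" "t < b" "a \<le> 1" "1 \<le> b" using t by (auto simp: a_def b_def)
  have "continuous_on {a..b} f" by (rule continuous_on_subset[OF cf]) (use ab in auto)
  then have "((\<lambda>u. LBINT y=ereal 1..ereal u. f y) has_vector_derivative (f t)) (at t within {a..b})"
    by (intro interval_integral_FTC2) (use ab in auto)
  then show ?thesis
    using at_within_Icc_at[of a t b] ab by (simp add: has_real_derivative_iff_has_vector_derivative)
qed

lemma tail_deriv:
  fixes m :: "real \<Rightarrow> real"
  assumes base: "set_integrable lborel {0<..} (\<lambda>s. s / (1 + s) * m s)"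
    and cm: "continuous_on {0<..} m" and nn: "\<forall>s>0. m s \<ge> 0" and t: "t > 0"
  shows "((\<lambda>u. LBINT s=ereal u..\<infinity>. m s) has_real_derivative - m t) (at t)"
proof -
  have eq: "(LBINT s=ereal u..\<infinity>. m s) = (LBINT s=ereal 1..\<infinity>. m s) - (LBINT s=ereal 1..ereal u. m s)"
    if u: "u > 0" for u
  proof -
    have "(LBINT s=ereal u..ereal 1. m s) + (LBINT s=ereal 1..\<infinity>. m s) = (LBINT s=ereal u..\<infinity>. m s)"
    proof (rule interval_integral_sum)
      have int: "set_integrable lborel {min u 1<..} m" by (rule int_tail[OF base cm nn]) (use u in auto)
      have e: "min (ereal u) (min (ereal 1) \<infinity>) = ereal (min u 1)" by simp
      have e2: "max (ereal u) (max (ereal 1) \<infinity>) = \<infinity>" by simp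
      show "interval_lebesgue_integrable lborel (min (ereal u) (min (ereal 1) \<infinity>))
        (max (ereal u) (max (ereal 1) \<infinity>)) m"
        unfolding interval_lebesgue_integrable_def e e2 einterval_eq_Ici using int by simp
    qed
    then show ?thesis using interval_integral_endpoints_reverse[of "ereal u" "ereal 1" m] by simp
  qed
  have "((\<lambda>u. (LBINT s=ereal 1..\<infinity>. m s) - (LBINT s=ereal 1..ereal u. m s)) has_real_derivative 0 - m t) (at t)"
    by (intro DERIV_diff DERIV_const prim_deriv[OF cm t])
  then have "((\<lambda>u. (LBINT s=ereal 1..\<infinity>. m s) - (LBINT s=ereal 1..ereal u. m s)) has_real_derivative - m t) (at t)"
    by (simp only: diff_0)
  then show ?thesis
  proof (rule has_field_derivative_transform_within_open[where S="{0<..}"])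
    fix x :: real assume "x \<in> {0<..}"
    then show "(LBINT s=ereal 1..\<infinity>. m s) - (LBINT s=ereal 1..ereal x. m s) = (LBINT s=ereal x..\<infinity>. m s)"
      using eq[of x] by simp
  qed (use t in auto)
qed

lemma head_deriv:
  fixes m :: "real \<Rightarrow> real"
  assumes base: "set_integrable lborel {0<..} (\<lambda>s. s / (1 + s) * m s)"
    and cm: "continuous_on {0<..} m" and nn: "\<forall>s>0. m s \<ge> 0" and t: "t > 0"
  shows "((\<lambda>u. LBINT s=ereal 0..ereal u. s * m s) has_real_derivative t * m t) (at t)"
proof -
  have cf: "continuous_on {0<..} (\<lambda>s. s * m s)" by (intro continuous_intros cm)
  have eq: "(LBINT s=ereal 0..ereal u. s * m s) = (LBINT s=ereal 0..ereal 1. s * m s) + (LBINT s=ereal 1..ereal u. s * m s)"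
    if u: "u > 0" for u
  proof (rule interval_integral_sum[symmetric])
    have int: "set_integrable lborel {0<..<max 1 u} (\<lambda>s. s * m s)" by (rule int_head[OF base cm nn])
    have e: "min (ereal 0) (min (ereal 1) (ereal u)) = ereal 0" using u by (auto simp: min_def)
    have e2: "max (ereal 0) (max (ereal 1) (ereal u)) = ereal (max 1 u)" using u by (auto simp: max_def)
    show "interval_lebesgue_integrable lborel (min (ereal 0) (min (ereal 1) (ereal u)))
        (max (ereal 0) (max (ereal 1) (ereal u))) (\<lambda>s. s * m s)"
      unfolding interval_lebesgue_integrable_def e e2 einterval_eq_Icc using int u by simp
  qed
  have "((\<lambda>u. (LBINT s=ereal 0..ereal 1. s * m s) + (LBINT s=ereal 1..ereal u. s * m s)) has_real_derivative 0 + t * m t) (at t)"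
    by (intro DERIV_add DERIV_const prim_deriv[OF cf t])
  then have "((\<lambda>u. (LBINT s=ereal 0..ereal 1. s * m s) + (LBINT s=ereal 1..ereal u. s * m s)) has_real_derivative t * m t) (at t)"
    by (simp only: add_0_left)
  then show ?thesis
  proof (rule has_field_derivative_transform_within_open[where S="{0<..}"])
    fix x :: real assume "x \<in> {0<..}"
    then show "(LBINT s=ereal 0..ereal 1. s * m s) + (LBINT s=ereal 1..ereal x. s * m s) = (LBINT s=ereal 0..ereal x. s * m s)"
      using eq[of x] by simp
  qed (use t in auto)
qed



lemma cm_basic:
  fixes m :: "real \<Rightarrow> real"
  assumes "completely_monotone m"
  shows "continuous_on {0<..} m" "\<forall>s>0. m s \<ge> 0"
proof -
  have d: "\<forall>x>0. m differentiable at x"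
    using assms unfolding completely_monotone_def by (metis funpow_0)
  show "continuous_on {0<..} m"
    by (intro continuous_at_imp_continuous_on ballI differentiable_imp_continuous_within) (use d in auto)
  show "\<forall>s>0. m s \<ge> 0"
    using assms unfolding completely_monotone_def by (metis funpow_0 mult_1 power_0)
qed

lemma forward:
  fixes r m g :: "real \<Rightarrow> real"
  assumes cbf: "cbf_triple g a b m" and req: "\<forall>t>0. r t = rate_fn a b m t"
    and rpos: "\<forall>t>0. r t > 0"
  shows "bernstein (\<lambda>t. t * r t)"
proof -
  have a: "a \<ge> 0" and cmm: "completely_monotone m"
    and base: "set_integrable lborel {0<..} (\<lambda>s. s / (1 + s) * m s)"
    using cbf unfolding cbf_triple_def by auto
  note cm = cm_basic(1)[OF cmm] and nn = cm_basic(2)[OF cmm]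
  define G where "G u = (LBINT s=ereal u..\<infinity>. m s)" for u
  define H where "H u = (LBINT s=ereal 0..ereal u. s * m s)" for u
  have heq: "t * r t = a * t / 2 + b + H t + t * G t" if t: "t > 0" for t
    using rate_mult[OF t, of a b m] split_int[OF base cm nn t] req t
    unfolding G_def H_def by simp
  have Gnn: "G u \<ge> 0" if "u > 0" for u
  proof -
    have "G u = (LINT s:{u<..}|lborel. m s)" unfolding G_def by (rule interval_integral_to_infinity_eq)
    also have "\<dots> \<ge> 0" unfolding set_lebesgue_integral_def
      by (rule Bochner_Integration.integral_nonneg) (use that nn in \<open>auto simp: indicator_def\<close>)
    finally show ?thesis .
  qed
  show ?thesis
  proof (rule bernstein_from[where hd="\<lambda>u. a / 2 + G u" and m=m])
    fix x :: real assume x: "x > 0"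
    have "((\<lambda>t. a * t / 2 + b + H t + t * G t) has_real_derivative
           a * 1 / 2 + 0 + x * m x + (1 * G x + (- m x) * x)) (at x)"
      by (intro DERIV_add DERIV_mult DERIV_const DERIV_ident DERIV_cdivide DERIV_cmult
          head_deriv[OF base cm nn x, folded H_def] tail_deriv[OF base cm nn x, folded G_def])
    then have "((\<lambda>t. a * t / 2 + b + H t + t * G t) has_real_derivative a / 2 + G x) (at x)"
      by (simp add: algebra_simps)
    then show "((\<lambda>t. t * r t) has_real_derivative a / 2 + G x) (at x)"
      by (rule has_field_derivative_transform_within_open[where S="{0<..}"]) (use x heq in auto)
    have "((\<lambda>u. a / 2 + G u) has_real_derivative 0 + - m x) (at x)"
      by (intro DERIV_add DERIV_const tail_deriv[OF base cm nn x, folded G_def])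
    then show "((\<lambda>u. a / 2 + G u) has_real_derivative - m x) (at x)" by simp
  next
    show "completely_monotone m" by (rule cmm)
    show "\<forall>x>0. x * r x \<ge> 0" using rpos by (auto intro: less_imp_le)
    show "\<forall>x>0. a / 2 + G x \<ge> 0" using a Gnn by (auto intro: add_nonneg_nonneg)
  qed
qed



lemma reverse:
  fixes h :: "real \<Rightarrow> real"
  assumes bh: "bernstein h"
  shows "\<exists>g a b m. cbf_triple g a b m \<and> (\<forall>t>0. h t = t * rate_fn a b m t)"
proof -
  have sm: "\<forall>n x. x > 0 \<longrightarrow> ((deriv ^^ n) h) differentiable (at x)"
   and sg: "\<forall>n\<ge>1. \<forall>x>0. (-1) ^ n * (deriv ^^ n) h x \<le> 0"
   and hpos: "\<forall>x>0. h x \<ge> 0"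
    using bh unfolding bernstein_def by auto
  define m where "m = (\<lambda>x. - deriv (deriv h) x)"
  have cmm: "completely_monotone m" unfolding m_def by (rule cm_from_bernstein[OF bh])
  note cm = cm_basic(1)[OF cmm] and nn = cm_basic(2)[OF cmm]
  have dh: "DERIV h x :> deriv h x" if x: "x > 0" for x
  proof -
    have "(deriv ^^ 0) h differentiable at x" using sm x by blast
    then show ?thesis by (simp add: DERIV_deriv_iff_real_differentiable)
  qed
  have dh1: "DERIV (deriv h) x :> deriv (deriv h) x" if x: "x > 0" for x
  proof -
    have "(deriv ^^ 1) h differentiable at x" using sm x by blast
    then show ?thesis by (simp add: DERIV_deriv_iff_real_differentiable)
  qed
  have cont2: "isCont (deriv (deriv h)) x" if x: "x > 0" for x
  proof -
    have "(deriv ^^ 2) h differentiable at x" using sm x by blast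
    then have "deriv (deriv h) differentiable at x" by (simp add: numeral_2_eq_2)
    then show ?thesis by (rule differentiable_imp_continuous_within)
  qed
  have cont0: "isCont h x" if "x > 0" for x using dh[OF that] by (rule DERIV_isCont)
  have cont1: "isCont (deriv h) x" if "x > 0" for x using dh1[OF that] by (rule DERIV_isCont)
  have h1pos: "deriv h x \<ge> 0" if x: "x > 0" for x
  proof -
    have "(-1) ^ 1 * (deriv ^^ 1) h x \<le> 0" using sg x by blast
    then show ?thesis by simp
  qed
  have h2neg: "deriv (deriv h) x \<le> 0" if x: "x > 0" for x
  proof -
    have "(2::nat) \<ge> 1" by simp
    then have "(-1) ^ 2 * (deriv ^^ 2) h x \<le> 0" using sg x by blast
    then show ?thesis by (simp add: numeral_2_eq_2)
  qed
  have mono_h: "h x \<le> h y" if xy: "0 < x" "x \<le> y" for x y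
  proof (cases "x = y")
    case False
    then have "x < y" using xy by simp
    then obtain z where z: "x < z" "z < y" "h y - h x = (y - x) * deriv h z"
      using MVT2[of x y h "deriv h"] dh xy by force
    have "0 \<le> (y - x) * deriv h z"
      using h1pos[of z] z xy by (intro mult_nonneg_nonneg) auto
    then show ?thesis using z by linarith
  qed simp
  have anti_h1: "deriv h y \<le> deriv h x" if xy: "0 < x" "x \<le> y" for x y
  proof (cases "x = y")
    case False
    then have "x < y" using xy by simp
    then obtain z where z: "x < z" "z < y" "deriv h y - deriv h x = (y - x) * deriv (deriv h) z"
      using MVT2[of x y "deriv h" "deriv (deriv h)"] dh1 xy by force
    have "(y - x) * deriv (deriv h) z \<le> 0"
      using h2neg[of z] z xy by (intro mult_nonneg_nonpos) auto
    then show ?thesis using z by linarith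
  qed simp
  have one: "(1::real) \<in> {0<..}" by simp
  define B0 where "B0 = Inf (h ` {0<..})"
  have ne: "h ` {0<..} \<noteq> {}" using one by blast
  have bdd: "bdd_below (h ` {0<..})" by (rule bdd_belowI[where m=0]) (use hpos in auto)
  have B0le: "B0 \<le> h x" if "x > 0" for x
    unfolding B0_def by (rule cInf_lower) (use that bdd in auto)
  have B0nn: "B0 \<ge> 0" unfolding B0_def by (rule cInf_greatest[OF ne]) (use hpos in auto)
  have lim0: "(h \<longlongrightarrow> B0) (at_right 0)"
  proof (rule decreasing_tendsto)
    show "\<forall>\<^sub>F x in at_right 0. B0 \<le> h x"
      unfolding eventually_at_right_field using B0le by (intro exI[of _ 1]) auto
    fix x assume "B0 < x"
    then obtain y where y: "y \<in> h ` {0<..}" "y < x" using cInf_lessD[OF ne] unfolding B0_def by blast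
    then obtain z where z: "z > 0" "h z < x" by auto
    show "\<forall>\<^sub>F n in at_right 0. h n < x"
      unfolding eventually_at_right_field
    proof (intro exI[of _ z] conjI allI impI)
      fix n :: real assume "0 < n" "n < z"
      then have "h n \<le> h z" by (intro mono_h) auto
      then show "h n < x" using z by linarith
    qed (use z in auto)
  qed
  define L where "L = Inf (deriv h ` {0<..})"
  have ne1: "deriv h ` {0<..} \<noteq> {}" using one by blast
  have bdd1: "bdd_below (deriv h ` {0<..})" by (rule bdd_belowI[where m=0]) (use h1pos in auto)
  have Lle: "L \<le> deriv h x" if "x > 0" for x
    unfolding L_def by (rule cInf_lower) (use that bdd1 in auto)
  have Lnn: "L \<ge> 0" unfolding L_def by (rule cInf_greatest[OF ne1]) (use h1pos in auto)
  have limL: "(deriv h \<longlongrightarrow> L) at_top"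
  proof (rule decreasing_tendsto)
    show "\<forall>\<^sub>F x in at_top. L \<le> deriv h x"
      using eventually_gt_at_top[of 0] by eventually_elim (rule Lle)
    fix x assume "L < x"
    then obtain y where y: "y \<in> deriv h ` {0<..}" "y < x" using cInf_lessD[OF ne1] unfolding L_def by blast
    then obtain z where z: "z > 0" "deriv h z < x" by auto
    show "\<forall>\<^sub>F n in at_top. deriv h n < x"
      using eventually_ge_at_top[of z]
    proof eventually_elim
      case (elim n)
      then have "deriv h n \<le> deriv h z" using z by (intro anti_h1) auto
      then show "deriv h n < x" using z by linarith
    qed
  qed
  have bnd: "s * deriv h s \<le> 2 * (h s - B0)" if s: "s > 0" for s
  proof -
    have "s / 2 < s" using s by simp
    then obtain z where z: "s / 2 < z" "z < s" "h s - h (s / 2) = (s - s / 2) * deriv h z"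
      using MVT2[of "s / 2" s h "deriv h"] dh s by force
    have "deriv h s \<le> deriv h z" using z s by (intro anti_h1) auto
    then have "(s / 2) * deriv h s \<le> (s / 2) * deriv h z" using s by (intro mult_left_mono) auto
    also have "\<dots> = h s - h (s / 2)" using z by simp
    also have "\<dots> \<le> h s - B0" using B0le[of "s / 2"] s by simp
    finally show ?thesis by simp
  qed
  have slim: "((\<lambda>s. s * deriv h s) \<longlongrightarrow> 0) (at_right 0)"
  proof (rule tendsto_sandwich[where f="\<lambda>_. 0" and h="\<lambda>s. 2 * (h s - B0)"])
    have ev: "\<forall>\<^sub>F s in at_right (0::real). s > 0"
      unfolding eventually_at_right_field by (intro exI[of _ 1]) auto
    show "\<forall>\<^sub>F s in at_right 0. 0 \<le> s * deriv h s"
      using ev by eventually_elim (use h1pos in auto)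
    show "\<forall>\<^sub>F s in at_right 0. s * deriv h s \<le> 2 * (h s - B0)"
      using ev by eventually_elim (rule bnd)
    show "((\<lambda>_. 0) \<longlongrightarrow> (0::real)) (at_right 0)" by simp
    have "((\<lambda>s. 2 * (h s - B0)) \<longlongrightarrow> 2 * (B0 - B0)) (at_right 0)"
      by (intro tendsto_intros lim0)
    then show "((\<lambda>s. 2 * (h s - B0)) \<longlongrightarrow> 0) (at_right 0)" by simp
  qed
  have ftcA: "set_integrable lborel {t<..} m \<and> (LBINT s=ereal t..\<infinity>. m s) = deriv h t - L"
    if t: "t > 0" for t
  proof -
    have F: "DERIV (\<lambda>s. - deriv h s) x :> m x" if "ereal t < ereal x" "ereal x < \<infinity>" for x
    proof -
      have x: "x > 0" using that t by simp
      show ?thesis using DERIV_minus[OF dh1[OF x]] unfolding m_def .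
    qed
    have C: "isCont m x" if "ereal t < ereal x" "ereal x < \<infinity>" for x
    proof -
      have x: "x > 0" using that t by simp
      show ?thesis unfolding m_def by (rule continuous_minus[OF cont2[OF x]])
    qed
    have N: "AE x in lborel. ereal t < ereal x \<longrightarrow> ereal x < \<infinity> \<longrightarrow> 0 \<le> m x"
      using nn t by (intro AE_I2) auto
    have "((deriv h) \<longlongrightarrow> deriv h t) (at t)" using cont1[OF t] by (simp add: isCont_def)
    then have "((deriv h) \<longlongrightarrow> deriv h t) (at_right t)" by (rule tendsto_within_subset) simp
    then have "((\<lambda>s. - deriv h s) \<longlongrightarrow> - deriv h t) (at_right t)" by (rule tendsto_minus)
    then have A: "(((\<lambda>s. - deriv h s) \<circ> real_of_ereal) \<longlongrightarrow> - deriv h t) (at_right (ereal t))"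
      unfolding ereal_tendsto_simps1 .
    have B: "(((\<lambda>s. - deriv h s) \<circ> real_of_ereal) \<longlongrightarrow> - L) (at_left \<infinity>)"
      unfolding ereal_tendsto_simps1 by (rule tendsto_minus[OF limL])
    have lt: "ereal t < \<infinity>" by simp
    note R = interval_integral_FTC_nonneg[OF lt F C N A B]
    show ?thesis using R by simp
  qed
  have ftcB: "set_integrable lborel {0<..<t} (\<lambda>s. s * m s) \<and>
      (LBINT s=ereal 0..ereal t. s * m s) = (h t - t * deriv h t) - (B0 - 0)"
    if t: "t > 0" for t
  proof -
    have F: "DERIV (\<lambda>s. h s - s * deriv h s) x :> x * m x" if "ereal 0 < ereal x" "ereal x < ereal t" for x
    proof -
      have x: "x > 0" using that by simp
      have "DERIV (\<lambda>s. h s - s * deriv h s) x :> deriv h x - (1 * deriv h x + deriv (deriv h) x * x)"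
        by (intro DERIV_diff DERIV_mult DERIV_ident dh[OF x] dh1[OF x])
      moreover have "deriv h x - (1 * deriv h x + deriv (deriv h) x * x) = x * m x"
        unfolding m_def by (simp add: mult.commute)
      ultimately show ?thesis by simp
    qed
    have C: "isCont (\<lambda>s. s * m s) x" if "ereal 0 < ereal x" "ereal x < ereal t" for x
    proof -
      have x: "x > 0" using that by simp
      have "isCont m x" unfolding m_def by (rule continuous_minus[OF cont2[OF x]])
      then show ?thesis by (rule continuous_mult[OF continuous_ident])
    qed
    have N: "AE x in lborel. ereal 0 < ereal x \<longrightarrow> ereal x < ereal t \<longrightarrow> 0 \<le> x * m x"
      using nn by (intro AE_I2) auto
    have "((\<lambda>s. h s - s * deriv h s) \<longlongrightarrow> B0 - 0) (at_right 0)"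
      by (intro tendsto_diff lim0 slim)
    then have A: "(((\<lambda>s. h s - s * deriv h s) \<circ> real_of_ereal) \<longlongrightarrow> B0 - 0) (at_right (ereal 0))"
      unfolding ereal_tendsto_simps1 .
    have "isCont (\<lambda>s. h s - s * deriv h s) t"
      by (rule continuous_diff[OF cont0[OF t] continuous_mult[OF continuous_ident cont1[OF t]]])
    then have "((\<lambda>s. h s - s * deriv h s) \<longlongrightarrow> h t - t * deriv h t) (at t)" by (simp add: isCont_def)
    then have "((\<lambda>s. h s - s * deriv h s) \<longlongrightarrow> h t - t * deriv h t) (at_left t)"
      by (rule tendsto_within_subset) simp
    then have B: "(((\<lambda>s. h s - s * deriv h s) \<circ> real_of_ereal) \<longlongrightarrow> h t - t * deriv h t) (at_left (ereal t))"
      unfolding ereal_tendsto_simps1 .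
    have lt: "ereal 0 < ereal t" using t by simp
    note R = interval_integral_FTC_nonneg[OF lt F C N A B]
    show ?thesis using R by simp
  qed
  have base: "set_integrable lborel {0<..} (\<lambda>s. s / (1 + s) * m s)"
  proof -
    have cq: "continuous_on {0<..} (\<lambda>s. s / (1 + s) * m s)"
      by (intro continuous_intros cm) auto
    have i1: "set_integrable lborel {0<..<2} (\<lambda>s. s / (1 + s) * m s)"
    proof (rule set_integrable_bound[where f="\<lambda>s. s * m s"])
      show "set_integrable lborel {0<..<2} (\<lambda>s. s * m s)" using ftcB[of 2] by simp
      show "set_borel_measurable lborel {0<..<2} (\<lambda>s. s / (1 + s) * m s)"
        by (rule meas_ind[OF continuous_on_subset[OF cq]]) auto
      show "AE x in lborel. x \<in> {0<..<2} \<longrightarrow> norm (x / (1 + x) * m x) \<le> norm (x * m x)"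
      proof (intro AE_I2 impI)
        fix x :: real assume "x \<in> {0<..<2}"
        then have x: "x > 0" "m x \<ge> 0" using nn by auto
        have "x / (1 + x) \<le> x" using x by (simp add: divide_le_eq algebra_simps)
        then have "x / (1 + x) * m x \<le> x * m x" using x by (intro mult_right_mono) auto
        then show "norm (x / (1 + x) * m x) \<le> norm (x * m x)" using x by simp
      qed
    qed
    have i2: "set_integrable lborel {1<..} (\<lambda>s. s / (1 + s) * m s)"
    proof (rule set_integrable_bound[where f="m"])
      show "set_integrable lborel {1<..} m" using ftcA[of 1] by simp
      show "set_borel_measurable lborel {1<..} (\<lambda>s. s / (1 + s) * m s)"
        by (rule meas_ind[OF continuous_on_subset[OF cq]]) auto
      show "AE x in lborel. x \<in> {1<..} \<longrightarrow> norm (x / (1 + x) * m x) \<le> norm (m x)"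
      proof (intro AE_I2 impI)
        fix x :: real assume "x \<in> {1<..}"
        then have x: "x > 0" "m x \<ge> 0" using nn by auto
        have "x / (1 + x) \<le> 1" using x by (simp add: divide_le_eq)
        then have "x / (1 + x) * m x \<le> 1 * m x" using x by (intro mult_right_mono) auto
        then show "norm (x / (1 + x) * m x) \<le> norm (m x)" using x by simp
      qed
    qed
    have "set_integrable lborel ({0<..<2} \<union> {1<..}) (\<lambda>s. s / (1 + s) * m s)"
      by (rule set_integrable_Un[OF i1 i2]) auto
    moreover have "{0<..<2} \<union> {1<..} = ({0<..} :: real set)" by auto
    ultimately show ?thesis by simp
  qed
  define g where "g z = 2 * L + B0 * z + (LINT s:{0<..}|lborel. (1 - exp (- s * z)) * m s)" for z
  have cbf: "cbf_triple g (2 * L) B0 m"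
    unfolding cbf_triple_def using Lnn B0nn cmm base by (simp add: g_def)
  have id: "h t = t * rate_fn (2 * L) B0 m t" if t: "t > 0" for t
  proof -
    have "t * rate_fn (2 * L) B0 m t = 2 * L * t / 2 + B0 + (LINT s:{0<..}|lborel. min s t * m s)"
      by (rule rate_mult[OF t])
    also have "\<dots> = 2 * L * t / 2 + B0 + ((LBINT s=ereal 0..ereal t. s * m s) + t * (LBINT s=ereal t..\<infinity>. m s))"
      using split_int[OF base cm nn t] by simp
    also have "\<dots> = 2 * L * t / 2 + B0 + (((h t - t * deriv h t) - (B0 - 0)) + t * (deriv h t - L))"
      using ftcA[OF t] ftcB[OF t] by simp
    also have "\<dots> = h t" by (simp add: algebra_simps)
    finally show ?thesis by simp
  qed
  show ?thesis using cbf id by blast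
qed

theorem theoremB2:
  fixes r :: "real \<Rightarrow> real"
  assumes "\<forall>t>0. r t > 0"
  shows "(\<exists>g a b m. cbf_triple g a b m \<and> (\<forall>t>0. r t = rate_fn a b m t))
         \<longleftrightarrow> bernstein (\<lambda>t. t * r t)"
proof
  assume "\<exists>g a b m. cbf_triple g a b m \<and> (\<forall>t>0. r t = rate_fn a b m t)"
  then obtain g a b m where c: "cbf_triple g a b m" and e: "\<forall>t>0. r t = rate_fn a b m t" by blast
  show "bernstein (\<lambda>t. t * r t)" by (rule forward[OF c e assms])
next
  assume "bernstein (\<lambda>t. t * r t)"
  from reverse[OF this] obtain g a b m where c: "cbf_triple g a b m"
    and e: "\<forall>t>0. t * r t = t * rate_fn a b m t" by blast
  have "\<forall>t>0. r t = rate_fn a b m t"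
  proof (intro allI impI)
    fix t :: real assume t: "t > 0"
    then have "t * r t = t * rate_fn a b m t" using e by blast
    then show "r t = rate_fn a b m t" using t by simp
  qed
  then show "\<exists>g a b m. cbf_triple g a b m \<and> (\<forall>t>0. r t = rate_fn a b m t)" using c by blast
qed


end
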